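(* Let $n\ge3$ and let $P$ be the $n\times n$ matrix whose first row has all entries equal to $1/n$ and whose row $i$, for $2\le i\le n$, has entry $1$ in column $i-1$ and zeros elsewhere. Then $P$ is SIA and its SIA index equals $n-1$; in particular the set $\mathcal V_{n-1}$ is nonempty.
   Context: Let $\mathcal N=\{1,\ldots,n\}$. A matrix is stochastic if it is entrywise nonnegative with row sums $1$. For stochastic $P$ and $\mathcal A\subseteq\mathcal N$, $F_P(\mathcal A)=\{j:\ p_{ij}>0\text{ for some } i\in\mathcal A\}$, $F_P^1=F_P$, $F_P^k(\mathcal A)=F_P(F_P^{k-1}(\mathcal A))$. $P$ is SIA if $\lim_{m\to\infty}P^m=\mathbf 1c^T$ for some nonnegative $c$ with entries summing to $1$. For an SIA matrix $P$ and each unordered pair of disjoint nonempty sets $\mathcal A,\tilde{\mathcal A}\subseteq\mathcal N$, let $s(\mathcal A,\tilde{\mathcal A})$ be the smallest integer $k\ge1$ such that either (i) $F_P^k(\mathcal A)\cap F_P^k(\tilde{\mathcal A})\ne\emptyset$, or (ii) $F_P^k(\mathcal A)\cap F_P^k(\tilde{\mathcal A})=\emptyset$ and $|F_P^k(\mathcal A)\cup F_P^k(\tilde{\mathcal A})|>|\mathcal A\cup\tilde{\mathcal A}|$. The SIA index of $P$ is the maximum of $s(\mathcal A,\tilde{\mathcal A})$ over all such pairs. $\mathcal V_k$ denotes the set of $n\times n$ SIA matrices with SIA index exactly $k$. *)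

theory Defs
  imports Complex_Main
begin

text \<open>n x n real matrices are represented as functions nat => nat => real,
  with rows and columns indexed by {1..n}; entries outside this range are ignored.\<close>

definition stochastic :: "nat \<Rightarrow> (nat \<Rightarrow> nat \<Rightarrow> real) \<Rightarrow> bool" where
  "stochastic n P \<longleftrightarrow>
     (\<forall>i\<in>{1..n}. \<forall>j\<in>{1..n}. P i j \<ge> 0) \<and> (\<forall>i\<in>{1..n}. (\<Sum>j=1..n. P i j) = 1)"

definition matmul :: "nat \<Rightarrow> (nat \<Rightarrow> nat \<Rightarrow> real) \<Rightarrow> (nat \<Rightarrow> nat \<Rightarrow> real) \<Rightarrow> (nat \<Rightarrow> nat \<Rightarrow> real)" where
  "matmul n A B = (\<lambda>i j. \<Sum>k=1..n. A i k * B k j)"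

fun matpow :: "nat \<Rightarrow> (nat \<Rightarrow> nat \<Rightarrow> real) \<Rightarrow> nat \<Rightarrow> (nat \<Rightarrow> nat \<Rightarrow> real)" where
  "matpow n P 0 = (\<lambda>i j. if i = j then 1 else 0)"
| "matpow n P (Suc m) = matmul n (matpow n P m) P"

definition SIA :: "nat \<Rightarrow> (nat \<Rightarrow> nat \<Rightarrow> real) \<Rightarrow> bool" where
  "SIA n P \<longleftrightarrow> stochastic n P \<and>
     (\<exists>c::nat \<Rightarrow> real. (\<forall>j\<in>{1..n}. c j \<ge> 0) \<and> (\<Sum>j=1..n. c j) = 1 \<and>
        (\<forall>i\<in>{1..n}. \<forall>j\<in>{1..n}. (\<lambda>m. matpow n P m i j) \<longlonglongrightarrow> c j))"

definition F :: "nat \<Rightarrow> (nat \<Rightarrow> nat \<Rightarrow> real) \<Rightarrow> nat set \<Rightarrow> nat set" where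
  "F n P A = {j\<in>{1..n}. \<exists>i\<in>A. P i j > 0}"

definition Fk :: "nat \<Rightarrow> (nat \<Rightarrow> nat \<Rightarrow> real) \<Rightarrow> nat \<Rightarrow> nat set \<Rightarrow> nat set" where
  "Fk n P k A = (F n P ^^ k) A"

definition s_index :: "nat \<Rightarrow> (nat \<Rightarrow> nat \<Rightarrow> real) \<Rightarrow> nat set \<Rightarrow> nat set \<Rightarrow> nat" where
  "s_index n P A B = (LEAST k. k \<ge> 1 \<and>
      (Fk n P k A \<inter> Fk n P k B \<noteq> {} \<or>
       (Fk n P k A \<inter> Fk n P k B = {} \<and> card (Fk n P k A \<union> Fk n P k B) > card (A \<union> B))))"

definition admissible_pair :: "nat \<Rightarrow> nat set \<Rightarrow> nat set \<Rightarrow> bool" where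
  "admissible_pair n A B \<longleftrightarrow> A \<subseteq> {1..n} \<and> B \<subseteq> {1..n} \<and> A \<noteq> {} \<and> B \<noteq> {} \<and> A \<inter> B = {}"

definition SIA_index :: "nat \<Rightarrow> (nat \<Rightarrow> nat \<Rightarrow> real) \<Rightarrow> nat" where
  "SIA_index n P = Max {s_index n P A B | A B. admissible_pair n A B}"

definition V :: "nat \<Rightarrow> nat \<Rightarrow> (nat \<Rightarrow> nat \<Rightarrow> real) set" where
  "V n k = {P. SIA n P \<and> SIA_index n P = k}"

end

theory Submission
  imports Defs
begin

locale shiftavg =
  fixes n :: nat and f :: "nat \<Rightarrow> nat \<Rightarrow> real"
  assumes n1: "1 \<le> n"
    and r1: "\<And>m. f (Suc m) 1 = (\<Sum>k=1..n. f m k) / real n"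
    and r2: "\<And>m i. 2 \<le> i \<Longrightarrow> i \<le> n \<Longrightarrow> f (Suc m) i = f m (i - 1)"
begin

lemma inv_upper:
  assumes "\<forall>i\<in>{1..n}. f m i \<le> U" "i \<in> {1..n}"
  shows "f (m + t) i \<le> U"
  using assms(2)
proof (induction t arbitrary: i)
  case 0 then show ?case using assms(1) by simp
next
  case (Suc t)
  show ?case
  proof (cases "i = 1")
    case True
    have "(\<Sum>k=1..n. f (m+t) k) \<le> of_nat (card {1..n}) * U"
      by (rule sum_bounded_above) (use Suc.IH in auto)
    then have "(\<Sum>k=1..n. f (m+t) k) \<le> real n * U" by simp
    then have "(\<Sum>k=1..n. f (m+t) k) / real n \<le> U" using n1
      by (simp add: divide_le_eq mult.commute)
    then show ?thesis using True r1[of "m+t"] by simp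
  next
    case False
    then have "f (m + Suc t) i = f (m+t) (i-1)" using r2[of i "m+t"] Suc.prems by auto
    also have "\<dots> \<le> U"
    proof -
      have "i - 1 \<in> {1..n}" using Suc.prems False by auto
      then show ?thesis using Suc.IH[of "i-1"] by blast
    qed
    finally show ?thesis .
  qed
qed

lemma inv_lower:
  assumes "\<forall>i\<in>{1..n}. L \<le> f m i" "i \<in> {1..n}"
  shows "L \<le> f (m + t) i"
  using assms(2)
proof (induction t arbitrary: i)
  case 0 then show ?case using assms(1) by simp
next
  case (Suc t)
  show ?case
  proof (cases "i = 1")
    case True
    have "of_nat (card {1..n}) * L \<le> (\<Sum>k=1..n. f (m+t) k)"
      by (rule sum_bounded_below) (use Suc.IH in auto)
    then have "real n * L \<le> (\<Sum>k=1..n. f (m+t) k)" by simp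
    then have "L \<le> (\<Sum>k=1..n. f (m+t) k) / real n" using n1
      by (simp add: le_divide_eq mult.commute)
    then show ?thesis using True r1[of "m+t"] by simp
  next
    case False
    then have "f (m + Suc t) i = f (m+t) (i-1)" using r2[of i "m+t"] Suc.prems by auto
    also have "L \<le> \<dots>"
    proof -
      have "i - 1 \<in> {1..n}" using Suc.prems False by auto
      then show ?thesis using Suc.IH[of "i-1"] by blast
    qed
    finally show ?thesis .
  qed
qed

lemma shift: "Suc d \<le> n \<Longrightarrow> f (m + d) (Suc d) = f m 1"
proof (induction d)
  case 0 then show ?case by simp
next
  case (Suc d)
  have "f (m + Suc d) (Suc (Suc d)) = f (m + d) (Suc d)"
    using r2[of "Suc (Suc d)" "m+d"] Suc.prems by simp
  then show ?case using Suc by simp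
qed

lemma gap_upper:
  assumes "\<forall>i\<in>{1..n}. f m i \<le> U"
  shows "f (m + t) 1 \<le> U - (U - f m 1) / real n ^ t"
proof (induction t)
  case 0 then show ?case by simp
next
  case (Suc t)
  have npos: "real n > 0" using n1 by simp
  have "(\<Sum>k=1..n. f (m+t) k) = f (m+t) 1 + (\<Sum>k=2..n. f (m+t) k)"
    using n1 by (simp add: sum.atLeast_Suc_atMost numeral_2_eq_2)
  also have "(\<Sum>k=2..n. f (m+t) k) \<le> of_nat (card {2..n}) * U"
    by (rule sum_bounded_above) (use inv_upper[OF assms] in auto)
  also have "of_nat (card {2..n}) = real n - 1" using n1 by simp
  finally have s: "(\<Sum>k=1..n. f (m+t) k) \<le> U - (U - f m 1) / real n ^ t + (real n - 1) * U"
    using Suc.IH by linarith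
  have "f (m + Suc t) 1 = (\<Sum>k=1..n. f (m+t) k) / real n" using r1[of "m+t"] by simp
  also have "\<dots> \<le> (U - (U - f m 1) / real n ^ t + (real n - 1) * U) / real n"
    using s npos by (simp add: divide_right_mono)
  also have "\<dots> = U - (U - f m 1) / real n ^ Suc t"
    using npos by (simp add: field_simps)
  finally show ?case .
qed

lemma gap_lower:
  assumes "\<forall>i\<in>{1..n}. L \<le> f m i"
  shows "L + (f m 1 - L) / real n ^ t \<le> f (m + t) 1"
proof (induction t)
  case 0 then show ?case by simp
next
  case (Suc t)
  have npos: "real n > 0" using n1 by simp
  have "(\<Sum>k=1..n. f (m+t) k) = f (m+t) 1 + (\<Sum>k=2..n. f (m+t) k)"
    using n1 by (simp add: sum.atLeast_Suc_atMost numeral_2_eq_2)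
  moreover have "of_nat (card {2..n}) * L \<le> (\<Sum>k=2..n. f (m+t) k)"
    by (rule sum_bounded_below) (use inv_lower[OF assms] in auto)
  moreover have "of_nat (card {2..n}) = real n - 1" using n1 by simp
  ultimately have "(real n - 1) * L \<le> (\<Sum>k=2..n. f (m+t) k)" by simp
  with \<open>(\<Sum>k=1..n. f (m+t) k) = f (m+t) 1 + (\<Sum>k=2..n. f (m+t) k)\<close> have s: "L + (f m 1 - L) / real n ^ t + (real n - 1) * L \<le> (\<Sum>k=1..n. f (m+t) k)"
    using Suc.IH by linarith
  have "L + (f m 1 - L) / real n ^ Suc t = (L + (f m 1 - L) / real n ^ t + (real n - 1) * L) / real n"
    using npos by (simp add: field_simps)
  also have "\<dots> \<le> (\<Sum>k=1..n. f (m+t) k) / real n"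
    using s npos by (simp add: divide_right_mono)
  also have "\<dots> = f (m + Suc t) 1" using r1[of "m+t"] by simp
  finally show ?case .
qed

lemma contract:
  assumes b: "\<forall>i\<in>{1..n}. L \<le> f m i \<and> f m i \<le> U" and i: "i \<in> {1..n}"
  shows "L + (f m 1 - L) / real n ^ n \<le> f (m + n) i \<and> f (m + n) i \<le> U - (U - f m 1) / real n ^ n"
proof -
  have npos: "real n \<ge> 1" using n1 by simp
  obtain d where d: "i = Suc d" using i by (cases i) auto
  have "m + n = (m + (n - d)) + d" using i d by simp
  then have eq: "f (m + n) i = f (m + (n - d)) 1" using shift[of d "m + (n-d)"] i d by simp
  have pw: "real n ^ (n - d) \<le> real n ^ n" using npos by (intro power_increasing) auto
  have pp: "0 < real n ^ (n - d)" using npos by simp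
  have m1: "f m 1 \<le> U" "L \<le> f m 1" using b n1 by auto
  have "(U - f m 1) / real n ^ n \<le> (U - f m 1) / real n ^ (n - d)"
    using m1 pw pp by (intro divide_left_mono) auto
  moreover have "(f m 1 - L) / real n ^ n \<le> (f m 1 - L) / real n ^ (n - d)"
    using m1 pw pp by (intro divide_left_mono) auto
  moreover have "f (m + (n - d)) 1 \<le> U - (U - f m 1) / real n ^ (n - d)"
    using gap_upper b by auto
  moreover have "L + (f m 1 - L) / real n ^ (n - d) \<le> f (m + (n - d)) 1"
    using gap_lower b by auto
  ultimately show ?thesis using eq by linarith
qed

definition "rr = 1 - 1 / real n ^ n"

lemma bounds:
  assumes init: "\<forall>i\<in>{1..n}. 0 \<le> f 0 i \<and> f 0 i \<le> 1"
  shows "\<exists>L U. U - L = rr ^ q \<and> (\<forall>t\<ge>q*n. \<forall>i\<in>{1..n}. L \<le> f t i \<and> f t i \<le> U)"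
proof (induction q)
  case 0
  show ?case
    apply (rule exI[of _ 0], rule exI[of _ 1])
    using inv_lower[of 0 0] inv_upper[of 0 1] init by auto
next
  case (Suc q)
  then obtain L U where LU: "U - L = rr ^ q" "\<forall>t\<ge>q*n. \<forall>i\<in>{1..n}. L \<le> f t i \<and> f t i \<le> U"
    by blast
  define m where "m = q * n"
  have b: "\<forall>i\<in>{1..n}. L \<le> f m i \<and> f m i \<le> U" using LU m_def by auto
  define L' where "L' = L + (f m 1 - L) / real n ^ n"
  define U' where "U' = U - (U - f m 1) / real n ^ n"
  have c: "\<forall>i\<in>{1..n}. L' \<le> f (m+n) i \<and> f (m+n) i \<le> U'"
    using contract[OF b] L'_def U'_def by blast
  have "U' - L' = (U - L) * rr" unfolding U'_def L'_def rr_def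
    by (simp add: algebra_simps add_divide_distrib[symmetric] diff_divide_distrib[symmetric])
  then have e: "U' - L' = rr ^ Suc q" using LU by simp
  have "\<forall>t\<ge>Suc q*n. \<forall>i\<in>{1..n}. L' \<le> f t i \<and> f t i \<le> U'"
  proof (intro allI impI ballI)
    fix t i assume t: "Suc q * n \<le> t" and i: "i \<in> {1..n}"
    have tt: "t = (m + n) + (t - (m+n))" using t m_def by simp
    show "L' \<le> f t i \<and> f t i \<le> U'"
      using inv_lower[of L' "m+n" i "t - (m+n)"] inv_upper[of "m+n" U' i "t - (m+n)"] c i tt
      by auto
  qed
  then show ?case using e by blast
qed

lemma rr_props: "0 \<le> rr" "rr < 1"
proof -
  have a: "real n ^ n \<ge> 1" using n1 by simp
  have "1 / real n ^ n \<le> 1 / 1" by (rule divide_left_mono) (use a in auto)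
  moreover have "0 < 1 / real n ^ n" using n1 by simp
  ultimately show "0 \<le> rr" "rr < 1" unfolding rr_def by auto
qed

lemma small_q: "0 < e \<Longrightarrow> \<exists>q. rr ^ q < e"
proof -
  assume e: "0 < e"
  have "(\<lambda>q. rr ^ q) \<longlonglongrightarrow> 0" using rr_props by (intro LIMSEQ_power_zero) simp
  then have "eventually (\<lambda>q. rr ^ q < e) sequentially" using e by (rule order_tendstoD(2))
  then show ?thesis by (auto simp: eventually_sequentially)
qed

lemma converges:
  assumes init: "\<forall>i\<in>{1..n}. 0 \<le> f 0 i \<and> f 0 i \<le> 1"
  shows "\<forall>i\<in>{1..n}. (\<lambda>t. f t i) \<longlonglongrightarrow> lim (\<lambda>t. f t 1)"
proof -
  have key: "\<exists>N. \<forall>t\<ge>N. \<forall>t'\<ge>N. \<forall>i\<in>{1..n}. \<forall>i'\<in>{1..n}. \<bar>f t i - f t' i'\<bar> < e" if e: "0 < e" for e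
  proof -
    obtain q where q: "rr ^ q < e" using small_q e by blast
    obtain L U where LU: "U - L = rr ^ q" "\<forall>t\<ge>q*n. \<forall>i\<in>{1..n}. L \<le> f t i \<and> f t i \<le> U"
      using bounds[OF init] by blast
    show ?thesis
    proof (rule exI[of _ "q*n"], intro allI impI ballI)
      fix t t' i i' assume "q*n \<le> t" "q*n \<le> t'" "i \<in> {1..n}" "i' \<in> {1..n}"
      then have "L \<le> f t i" "f t i \<le> U" "L \<le> f t' i'" "f t' i' \<le> U" using LU(2) by auto
      then show "\<bar>f t i - f t' i'\<bar> < e" using LU(1) q by linarith
    qed
  qed
  have one: "1 \<in> {1..n}" using n1 by simp
  have "Cauchy (\<lambda>t. f t 1)"
  proof (rule CauchyI)
    fix e :: real assume "0 < e"
    then obtain N where N: "\<forall>t\<ge>N. \<forall>t'\<ge>N. \<forall>i\<in>{1..n}. \<forall>i'\<in>{1..n}. \<bar>f t i - f t' i'\<bar> < e"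
      using key by blast
    show "\<exists>M. \<forall>m\<ge>M. \<forall>na\<ge>M. norm (f m 1 - f na 1) < e"
      using one N by (intro exI[of _ N]) auto
  qed
  then have conv: "(\<lambda>t. f t 1) \<longlonglongrightarrow> lim (\<lambda>t. f t 1)"
    using Cauchy_convergent convergent_LIMSEQ_iff by blast
  show ?thesis
  proof
    fix i assume i: "i \<in> {1..n}"
    have d: "(\<lambda>t. f t i - f t 1) \<longlonglongrightarrow> 0"
    proof (rule LIMSEQ_I)
      fix e :: real assume "0 < e"
      then obtain N where N: "\<forall>t\<ge>N. \<forall>t'\<ge>N. \<forall>i\<in>{1..n}. \<forall>i'\<in>{1..n}. \<bar>f t i - f t' i'\<bar> < e"
        using key by blast
      show "\<exists>no. \<forall>na\<ge>no. norm (f na i - f na 1 - 0) < e"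
        using one i N by (intro exI[of _ N]) auto
    qed
    have "(\<lambda>t. (f t i - f t 1) + f t 1) \<longlonglongrightarrow> 0 + lim (\<lambda>t. f t 1)"
      by (intro tendsto_add d conv)
    then show "(\<lambda>t. f t i) \<longlonglongrightarrow> lim (\<lambda>t. f t 1)" by simp
  qed
qed

end


lemma left_rec:
  assumes "i \<in> {1..n}" "j \<in> {1..n}"
  shows "matpow n P (Suc m) i j = (\<Sum>k=1..n. P i k * matpow n P m k j)"
  using assms
proof (induction m arbitrary: i j)
  case 0
  have "matpow n P (Suc 0) i j = (\<Sum>k=1..n. (if i = k then 1 else 0) * P k j)"
    by (simp add: matmul_def)
  also have "\<dots> = (\<Sum>k=1..n. if i = k then P k j else 0)"
    by (intro sum.cong) auto
  also have "\<dots> = P i j" using 0 by (simp add: sum.delta)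
  also have "\<dots> = (\<Sum>k=1..n. if k = j then P i k else 0)"
    using 0 by (simp add: sum.delta)
  also have "\<dots> = (\<Sum>k=1..n. P i k * (if k = j then 1 else 0))"
    by (intro sum.cong) auto
  finally show ?case by simp
next
  case (Suc m)
  have "matpow n P (Suc (Suc m)) i j = (\<Sum>l=1..n. matpow n P (Suc m) i l * P l j)"
    by (simp add: matmul_def)
  also have "\<dots> = (\<Sum>l=1..n. (\<Sum>k=1..n. P i k * matpow n P m k l) * P l j)"
    using Suc.IH Suc.prems by (intro sum.cong) auto
  also have "\<dots> = (\<Sum>k=1..n. P i k * (\<Sum>l=1..n. matpow n P m k l * P l j))"
    by (simp add: sum_distrib_left sum_distrib_right mult.assoc) (rule sum.swap)
  also have "\<dots> = (\<Sum>k=1..n. P i k * matpow n P (Suc m) k j)"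
    by (simp add: matmul_def)
  finally show ?case .
qed

lemma row_sums:
  assumes st: "stochastic n P" and i: "i \<in> {1..n}"
  shows "(\<Sum>j=1..n. matpow n P m i j) = 1"
  using i
proof (induction m arbitrary: i)
  case 0 then show ?case by (simp add: sum.delta)
next
  case (Suc m)
  have "(\<Sum>j=1..n. matpow n P (Suc m) i j) = (\<Sum>j=1..n. \<Sum>k=1..n. P i k * matpow n P m k j)"
    using left_rec[OF Suc.prems] by (intro sum.cong) auto
  also have "\<dots> = (\<Sum>k=1..n. P i k * (\<Sum>j=1..n. matpow n P m k j))"
    by (subst sum.swap) (simp add: sum_distrib_left)
  also have "\<dots> = (\<Sum>k=1..n. P i k)" using Suc.IH by simp
  also have "\<dots> = 1" using st Suc.prems unfolding stochastic_def by blast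
  finally show ?case .
qed


definition Pm :: "nat \<Rightarrow> nat \<Rightarrow> nat \<Rightarrow> real" where
  "Pm n = (\<lambda>i j. if i = 1 then 1 / real n else if j = i - 1 then 1 else 0)"

lemma F_eq:
  assumes "1 \<le> n"
  shows "F n (Pm n) A = (if 1 \<in> A then {1..n} else {j\<in>{1..n}. Suc j \<in> A})"
proof (cases "1 \<in> A")
  case True
  then show ?thesis using assms unfolding F_def Pm_def by auto
next
  case False
  have "F n (Pm n) A = {j\<in>{1..n}. Suc j \<in> A}"
  proof (intro set_eqI iffI)
    fix j assume "j \<in> F n (Pm n) A"
    then obtain i where "j \<in> {1..n}" "i \<in> A" "Pm n i j > 0" unfolding F_def by auto
    moreover have "i \<noteq> 1" using False \<open>i \<in> A\<close> by auto
    ultimately show "j \<in> {j\<in>{1..n}. Suc j \<in> A}" unfolding Pm_def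
      by (auto split: if_splits)
  next
    fix j assume "j \<in> {j\<in>{1..n}. Suc j \<in> A}"
    then show "j \<in> F n (Pm n) A" unfolding F_def Pm_def
      by (auto intro!: bexI[of _ "Suc j"])
  qed
  then show ?thesis using False by simp
qed

lemma Fk_Suc: "Fk n P (Suc t) A = F n P (Fk n P t A)"
  by (simp add: Fk_def)

lemma Fk_shift:
  assumes n: "1 \<le> n" and A: "A \<subseteq> {1..n}"
  shows "\<forall>a\<in>A. t < a \<Longrightarrow> Fk n (Pm n) t A = {j\<in>{1..n}. j + t \<in> A}"
proof (induction t)
  case 0 then show ?case using A by (auto simp: Fk_def)
next
  case (Suc t)
  have pre: "\<forall>a\<in>A. t < a" using Suc.prems by fastforce
  have IH: "Fk n (Pm n) t A = {j\<in>{1..n}. j + t \<in> A}" using Suc.IH[OF pre] .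
  have "1 \<notin> Fk n (Pm n) t A" using IH Suc.prems by fastforce
  then have "Fk n (Pm n) (Suc t) A = {j\<in>{1..n}. Suc j \<in> Fk n (Pm n) t A}"
    by (simp add: Fk_Suc F_eq[OF n])
  also have "\<dots> = {j\<in>{1..n}. j + Suc t \<in> A}" using IH A by auto
  finally show ?case .
qed

lemma good_min:
  assumes n: "1 \<le> n" and adm: "admissible_pair n A B" and m: "m = Min (A \<union> B)" and mA: "m \<in> A"
  shows "1 \<le> m \<and> (Fk n (Pm n) m A \<inter> Fk n (Pm n) m B \<noteq> {})"
proof -
  have A: "A \<subseteq> {1..n}" and B: "B \<subseteq> {1..n}" and ne: "B \<noteq> {}" and dj: "A \<inter> B = {}"
    using adm unfolding admissible_pair_def by auto
  have fin: "finite (A \<union> B)" using A B finite_subset by (metis finite_atLeastAtMost le_sup_iff)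
  have low: "\<forall>x\<in>A \<union> B. m \<le> x" using m fin by auto
  have m1: "1 \<le> m" using mA A by auto
  then obtain t where t: "m = Suc t" by (cases m) auto
  have pre: "\<forall>a\<in>A. t < a" using low t by (simp add: Suc_le_eq)
  have "Fk n (Pm n) t A = {j\<in>{1..n}. j + t \<in> A}"
    using Fk_shift[OF n A pre] .
  then have "1 \<in> Fk n (Pm n) t A" using mA t n by auto
  then have FA: "Fk n (Pm n) m A = {1..n}" using t by (simp add: Fk_Suc F_eq[OF n])
  have gtB: "\<forall>b\<in>B. m < b" using low dj mA by (metis IntI UnI2 empty_iff le_neq_implies_less)
  have FB: "Fk n (Pm n) m B = {j\<in>{1..n}. j + m \<in> B}" using Fk_shift[OF n B, of m] gtB by blast
  obtain b where b: "b \<in> B" using ne by auto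
  have bm: "m < b" "b \<le> n" using b gtB B by auto
  then have bR: "b - m \<in> {1..n}" by auto
  have "b - m \<in> Fk n (Pm n) m B" unfolding FB using bR bm b by auto
  moreover have "b - m \<in> {1..n}" using bR .
  ultimately show ?thesis using FA m1 by auto
qed

lemma s_sym: "s_index n P A B = s_index n P B A"
  unfolding s_index_def by (simp add: Int_commute Un_commute)

lemma s_upper:
  assumes n: "1 \<le> n" and adm: "admissible_pair n A B"
  shows "s_index n (Pm n) A B \<le> Min (A \<union> B)"
proof -
  have fin: "finite (A \<union> B)" "A \<union> B \<noteq> {}" using adm unfolding admissible_pair_def
    by (auto intro: finite_subset)
  have adm2: "admissible_pair n B A" using adm unfolding admissible_pair_def by auto
  define m where "m = Min (A \<union> B)"
  have "m \<in> A \<union> B" using Min_in[OF fin] m_def by simp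
  then show ?thesis
  proof
    assume "m \<in> A"
    then have "1 \<le> m \<and> (Fk n (Pm n) m A \<inter> Fk n (Pm n) m B \<noteq> {})"
      using good_min[OF n adm m_def] by blast
    then show ?thesis unfolding s_index_def m_def[symmetric] by (intro Least_le) blast
  next
    assume "m \<in> B"
    then have "1 \<le> m \<and> (Fk n (Pm n) m B \<inter> Fk n (Pm n) m A \<noteq> {})"
      using good_min[OF n adm2, of m] m_def by (simp add: Un_commute)
    then show ?thesis unfolding s_index_def m_def[symmetric] by (intro Least_le) (simp add: Int_commute)
  qed
qed

lemma min_le:
  assumes adm: "admissible_pair n A B"
  shows "Min (A \<union> B) \<le> n - 1"
proof -
  obtain a b where a: "a \<in> A" and b: "b \<in> B" using adm unfolding admissible_pair_def by auto
  have "a \<noteq> b" "a \<le> n" "b \<le> n" using a b adm unfolding admissible_pair_def by auto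
  moreover have "finite (A \<union> B)" using adm unfolding admissible_pair_def
    by (auto intro: finite_subset)
  ultimately have "Min (A \<union> B) \<le> a" "Min (A \<union> B) \<le> b" using a b by auto
  then show ?thesis using \<open>a \<noteq> b\<close> \<open>a \<le> n\<close> \<open>b \<le> n\<close> by linarith
qed

lemma s_example:
  assumes n: "3 \<le> n"
  shows "s_index n (Pm n) {n} {n-1} = n - 1"
proof -
  have n1: "1 \<le> n" using n by simp
  have adm: "admissible_pair n {n} {n-1}" using n unfolding admissible_pair_def by auto
  have mn: "Min ({n} \<union> {n-1}) = n - 1" using n by auto
  have g: "1 \<le> n - 1 \<and> (Fk n (Pm n) (n-1) {n-1} \<inter> Fk n (Pm n) (n-1) {n} \<noteq> {})"
    using good_min[of n "{n-1}" "{n}" "n-1"] n1 adm mn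
    unfolding admissible_pair_def by (auto simp: Un_commute)
  show ?thesis unfolding s_index_def
  proof (rule Least_equality)
    show "1 \<le> n - 1 \<and> (Fk n (Pm n) (n - 1) {n} \<inter> Fk n (Pm n) (n - 1) {n - 1} \<noteq> {} \<or>
        Fk n (Pm n) (n - 1) {n} \<inter> Fk n (Pm n) (n - 1) {n - 1} = {} \<and>
        card ({n} \<union> {n - 1}) < card (Fk n (Pm n) (n - 1) {n} \<union> Fk n (Pm n) (n - 1) {n - 1}))"
      using g by (auto simp: Int_commute)
  next
    fix k assume k: "1 \<le> k \<and> (Fk n (Pm n) k {n} \<inter> Fk n (Pm n) k {n - 1} \<noteq> {} \<or>
        Fk n (Pm n) k {n} \<inter> Fk n (Pm n) k {n - 1} = {} \<and>
        card ({n} \<union> {n - 1}) < card (Fk n (Pm n) k {n} \<union> Fk n (Pm n) k {n - 1}))"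
    show "n - 1 \<le> k"
    proof (rule ccontr)
      assume "\<not> n - 1 \<le> k"
      then have kl: "k < n - 1" by simp
      have "Fk n (Pm n) k {n} = {j\<in>{1..n}. j + k \<in> {n}}"
        by (rule Fk_shift[OF n1]) (use kl in auto)
      also have "\<dots> = {n - k}" using kl by auto
      finally have e1: "Fk n (Pm n) k {n} = {n - k}" .
      have "Fk n (Pm n) k {n-1} = {j\<in>{1..n}. j + k \<in> {n-1}}"
        by (rule Fk_shift[OF n1]) (use kl n in auto)
      also have "\<dots> = {n - 1 - k}" using kl by auto
      finally have e2: "Fk n (Pm n) k {n-1} = {n - 1 - k}" .
      have d: "n - k \<noteq> n - 1 - k" using kl by simp
      have c1: "card ({n} \<union> {n - 1}) = 2" using n by simp
      have c2: "card ({n - k} \<union> {n - 1 - k}) = 2" using d by simp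
      have i: "{n - k} \<inter> {n - 1 - k} = {}" using d by simp
      show False using k unfolding e1 e2 c1 c2 i by simp
    qed
  qed
qed


lemma Pm_stochastic: "1 \<le> n \<Longrightarrow> stochastic n (Pm n)"
proof -
  assume n: "1 \<le> n"
  have "(\<Sum>j=1..n. Pm n i j) = 1" if i: "i \<in> {1..n}" for i
  proof (cases "i = 1")
    case True then show ?thesis using n by (simp add: Pm_def)
  next
    case False
    have "2 \<le> i" "i \<le> n" using False i by (cases i; auto)+
    then have "1 \<le> i - 1" "i - 1 \<le> n" by linarith+
    then have im: "i - 1 \<in> {1..n}" by simp
    have "(\<Sum>j=1..n. Pm n i j) = (\<Sum>j=1..n. if j = i - 1 then 1 else 0)"
      using False by (simp add: Pm_def)
    also have "\<dots> = 1" using im by (simp add: sum.delta)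
    finally show ?thesis .
  qed
  then show ?thesis unfolding stochastic_def by (auto simp: Pm_def)
qed

lemma Pm_SIA:
  assumes n: "1 \<le> n"
  shows "SIA n (Pm n)"
proof -
  define c where "c j = lim (\<lambda>m. matpow n (Pm n) m 1 j)" for j
  have one: "1 \<in> {1..n}" using n by simp
  have conv: "\<forall>i\<in>{1..n}. (\<lambda>m. matpow n (Pm n) m i j) \<longlonglongrightarrow> c j"
    and nonneg: "\<forall>m. \<forall>i\<in>{1..n}. 0 \<le> matpow n (Pm n) m i j"
    if j: "j \<in> {1..n}" for j
  proof -
    interpret sa: shiftavg n "\<lambda>m i. matpow n (Pm n) m i j"
    proof
      show "1 \<le> n" by (rule n)
      fix m
      have "matpow n (Pm n) (Suc m) 1 j = (\<Sum>k=1..n. Pm n 1 k * matpow n (Pm n) m k j)"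
        using left_rec[OF one j] .
      also have "\<dots> = (\<Sum>k=1..n. matpow n (Pm n) m k j) / real n"
        by (simp add: Pm_def sum_divide_distrib)
      finally show "matpow n (Pm n) (Suc m) 1 j = (\<Sum>k=1..n. matpow n (Pm n) m k j) / real n" .
    next
      fix m i assume i: "2 \<le> i" "i \<le> n"
      then have iR: "i \<in> {1..n}" by simp
      have "1 \<le> i - 1" "i - 1 \<le> n" using i by linarith+
      then have im: "i - 1 \<in> {1..n}" by simp
      have "matpow n (Pm n) (Suc m) i j = (\<Sum>k=1..n. Pm n i k * matpow n (Pm n) m k j)"
        using left_rec[OF iR j] .
      also have "\<dots> = (\<Sum>k=1..n. if k = i - 1 then matpow n (Pm n) m k j else 0)"
        using i by (intro sum.cong) (auto simp: Pm_def)
      also have "\<dots> = matpow n (Pm n) m (i - 1) j" using im by (simp add: sum.delta)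
      finally show "matpow n (Pm n) (Suc m) i j = matpow n (Pm n) m (i - 1) j" .
    qed
    have init: "\<forall>i\<in>{1..n}. 0 \<le> matpow n (Pm n) 0 i j \<and> matpow n (Pm n) 0 i j \<le> 1" by simp
    show "\<forall>i\<in>{1..n}. (\<lambda>m. matpow n (Pm n) m i j) \<longlonglongrightarrow> c j"
      using sa.converges[OF init] unfolding c_def .
    show "\<forall>m. \<forall>i\<in>{1..n}. 0 \<le> matpow n (Pm n) m i j"
      using sa.inv_lower[of 0 0] init by auto
  qed
  have c0: "\<forall>j\<in>{1..n}. 0 \<le> c j"
  proof
    fix j assume j: "j \<in> {1..n}"
    show "0 \<le> c j"
      by (rule LIMSEQ_le_const[OF conv[OF j, rule_format, OF one]]) (use nonneg[OF j] one in auto)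
  qed
  have "(\<lambda>m. \<Sum>j=1..n. matpow n (Pm n) m 1 j) \<longlonglongrightarrow> (\<Sum>j=1..n. c j)"
    by (rule tendsto_sum) (use conv one in auto)
  moreover have "(\<lambda>m. \<Sum>j=1..n. matpow n (Pm n) m 1 j) = (\<lambda>m. 1)"
    using row_sums[OF Pm_stochastic[OF n] one] by simp
  ultimately have "(\<Sum>j=1..n. c j) = 1" using LIMSEQ_unique tendsto_const by metis
  then show ?thesis unfolding SIA_def using Pm_stochastic[OF n] c0 conv by blast
qed

lemma Pm_index:
  assumes n: "3 \<le> n"
  shows "SIA_index n (Pm n) = n - 1"
proof -
  define S where "S = {s_index n (Pm n) A B |A B. admissible_pair n A B}"
  have n1: "1 \<le> n" using n by simp
  have up: "s_index n (Pm n) A B \<le> n - 1" if "admissible_pair n A B" for A B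
    using s_upper[OF n1 that] min_le[OF that] by linarith
  have sub: "S \<subseteq> {..n-1}"
  proof
    fix x assume "x \<in> S"
    then obtain A B where "x = s_index n (Pm n) A B" "admissible_pair n A B"
      unfolding S_def by blast
    then show "x \<in> {..n-1}" using up by simp
  qed
  have adm: "admissible_pair n {n} {n-1}" using n unfolding admissible_pair_def by auto
  have mem: "n - 1 \<in> S" unfolding S_def
    using adm s_example[OF n] by (intro CollectI exI conjI) (rule sym, assumption+)
  have "Max S = n - 1"
    by (rule Max_eqI) (use sub mem finite_subset[OF sub] in auto)
  then show ?thesis unfolding SIA_index_def S_def .
qed

theorem mainTheorem2:
  fixes n :: nat and P :: "nat \<Rightarrow> nat \<Rightarrow> real"
  assumes "n \<ge> 3"
    and "P = (\<lambda>i j. if i = 1 then 1 / real n else if j = i - 1 then 1 else 0)"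
  shows "SIA n P \<and> SIA_index n P = n - 1 \<and> V n (n - 1) \<noteq> {}"
proof -
  have P: "P = Pm n" using assms(2) unfolding Pm_def by simp
  have s: "SIA n P" using Pm_SIA[of n] assms(1) P by simp
  have i: "SIA_index n P = n - 1" using Pm_index[OF assms(1)] P by simp
  have "P \<in> V n (n - 1)" using s i unfolding V_def by simp
  then show ?thesis using s i by blast
qed

end
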